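(* Consider an instance $(S,C,T,\mathbf{p},\mathbf{c})$ of the value-dependent DFEP with binary tests ($\ell=2$), where $S$ contains objects of at least two distinct classes. Let $\tau\in T$ be a test minimizing $\max_{i\in\{1,2\}} \frac{c^i(t)}{P(S)-P(S^i_t)}$ over all $t\in T$ (the test chosen by \textsc{DividePairs} at the root), and let $q\in\{1,2\}$ be an index attaining $\max\{c^1(\tau)+Cost_W(S^1_\tau),\; c^2(\tau)+Cost_W(S^2_\tau)\}$, where $Cost_W(G)$ is the worst testing cost of the decision tree produced by \textsc{DividePairs} on $G$. Then $$OPT_W(S)\;\ge\; \frac{c^q(\tau)\,P(S)}{P(S)-P(S^q_\tau)}.$$
   Context: Value-dependent DFEP: $S$ is a finite set of $n$ objects partitioned into classes $C=\{C_1,\dots,C_m\}$; $\mathbf p$ is a probability distribution on $S$; $T$ is a set of tests $t:S\to\{1,\dots,\ell\}$, complete in the sense that any two distinct objects are distinguished by some test; each test $t$ has $\ell$ costs $c^1(t),\dots,c^\ell(t)\in\mathbb{Q}^+$, and applying $t$ to object $s$ costs $c^{t(s)}(t)$. For $G\subseteq S$, $G^i_t=\{s\in G: t(s)=i\}$. A decision tree for $G$ is a leaf labeled with a class if all objects of $G$ are in that class; otherwise its root is labeled with a test $t$ and its children are decision trees for the nonempty sets $G^i_t$. For an object $s$, $cost(D,s)$ is the sum of $c^{t(s)}(t)$ over the tests $t$ on the root-to-leaf path of $s$ in $D$; $cost_W(D)=\max_s cost(D,s)$, and $OPT_W(G)$ is the minimum of $cost_W(D)$ over decision trees $D$ for $G$.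 A pair of objects is separable if they lie in different classes; $P(G)$ is the number of separable pairs in $G$, i.e. $P(G)=\sum_{i<j} n_in_j$ where $n_i$ is the number of objects of $G$ in class $i$. A ratio with zero denominator is taken as $+\infty$. Algorithm \textsc{DividePairs} on a set $G$: if all objects of $G$ are in the same class, return a leaf; otherwise choose a test $t$ minimizing $\max_{1\le i\le\ell} c^i(t)/(P(G)-P(G^i_t))$, make it the root, and recursively build the subtrees for each nonempty $G^i_t$. *)

theory Defs
  imports "HOL-Library.Extended_Real"
begin

datatype ('a, 'c) dtree = Leaf 'c | Node "'a \<Rightarrow> nat" "nat \<Rightarrow> ('a, 'c) dtree"

definition part :: "'a set \<Rightarrow> ('a \<Rightarrow> nat) \<Rightarrow> nat \<Rightarrow> 'a set" where
  "part G t i = {s \<in> G. t s = i}"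

definition sep_pairs :: "('a \<Rightarrow> 'c) \<Rightarrow> 'a set \<Rightarrow> nat" where
  "sep_pairs cls G = card {{x, y} | x y. x \<in> G \<and> y \<in> G \<and> cls x \<noteq> cls y}"

text \<open>Cost of classifying object s with tree D; c t i is the cost of test t on outcome i.\<close>
primrec cost :: "(('a \<Rightarrow> nat) \<Rightarrow> nat \<Rightarrow> real) \<Rightarrow> ('a, 'c) dtree \<Rightarrow> 'a \<Rightarrow> real" where
  "cost c (Leaf k) s = 0"
| "cost c (Node t f) s = c t (t s) + cost c (f (t s)) s"

definition cost_W :: "(('a \<Rightarrow> nat) \<Rightarrow> nat \<Rightarrow> real) \<Rightarrow> ('a, 'c) dtree \<Rightarrow> 'a set \<Rightarrow> real" where
  "cost_W c D G = Max ((\<lambda>s. cost c D s) ` G)"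

inductive is_dtree :: "('a \<Rightarrow> 'c) \<Rightarrow> ('a \<Rightarrow> nat) set \<Rightarrow> 'a set \<Rightarrow> ('a, 'c) dtree \<Rightarrow> bool"
  for cls T where
  leaf: "(\<forall>s\<in>G. cls s = k) \<Longrightarrow> is_dtree cls T G (Leaf k)"
| node: "\<not> (\<exists>k. \<forall>s\<in>G. cls s = k) \<Longrightarrow> t \<in> T \<Longrightarrow>
         (\<forall>i. part G t i \<noteq> {} \<longrightarrow> is_dtree cls T (part G t i) (f i)) \<Longrightarrow>
         is_dtree cls T G (Node t f)"

definition OPT_W :: "('a \<Rightarrow> 'c) \<Rightarrow> ('a \<Rightarrow> nat) set \<Rightarrow> (('a \<Rightarrow> nat) \<Rightarrow> nat \<Rightarrow> real) \<Rightarrow> 'a set \<Rightarrow> real" where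
  "OPT_W cls T c G = Inf {cost_W c D G | D. is_dtree cls T G D}"

text \<open>The ratio c^i(t)/(P(G)-P(G^i_t)), +infinity when the denominator is 0.\<close>
definition ratio :: "('a \<Rightarrow> 'c) \<Rightarrow> (('a \<Rightarrow> nat) \<Rightarrow> nat \<Rightarrow> real) \<Rightarrow> 'a set \<Rightarrow> ('a \<Rightarrow> nat) \<Rightarrow> nat \<Rightarrow> ereal" where
  "ratio cls c G t i =
     (let d = real (sep_pairs cls G) - real (sep_pairs cls (part G t i))
      in if d = 0 then \<infinity> else ereal (c t i / d))"

definition ratio2 :: "('a \<Rightarrow> 'c) \<Rightarrow> (('a \<Rightarrow> nat) \<Rightarrow> nat \<Rightarrow> real) \<Rightarrow> 'a set \<Rightarrow> ('a \<Rightarrow> nat) \<Rightarrow> ereal" where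
  "ratio2 cls c G t = max (ratio cls c G t 1) (ratio cls c G t 2)"

text \<open>Trees that DividePairs (binary case, any tie-breaking) may produce on G.\<close>
inductive dp_tree :: "('a \<Rightarrow> 'c) \<Rightarrow> ('a \<Rightarrow> nat) set \<Rightarrow> (('a \<Rightarrow> nat) \<Rightarrow> nat \<Rightarrow> real) \<Rightarrow> 'a set \<Rightarrow> ('a, 'c) dtree \<Rightarrow> bool"
  for cls T c where
  leaf: "(\<forall>s\<in>G. cls s = k) \<Longrightarrow> dp_tree cls T c G (Leaf k)"
| node: "\<not> (\<exists>k. \<forall>s\<in>G. cls s = k) \<Longrightarrow> t \<in> T \<Longrightarrow>
         (\<forall>t'\<in>T. ratio2 cls c G t \<le> ratio2 cls c G t') \<Longrightarrow>
         (\<forall>i. part G t i \<noteq> {} \<longrightarrow> dp_tree cls T c (part G t i) (f i)) \<Longrightarrow>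
         dp_tree cls T c G (Node t f)"

end

theory Submission
  imports Defs
begin

definition prs :: "('a \<Rightarrow> 'c) \<Rightarrow> 'a set \<Rightarrow> 'a set set" where
  "prs cls G = {{x, y} | x y. x \<in> G \<and> y \<in> G \<and> cls x \<noteq> cls y}"

lemma sep_prs: "sep_pairs cls G = card (prs cls G)"
  by (simp add: sep_pairs_def prs_def)

lemma prs_fin: "finite G \<Longrightarrow> finite (prs cls G)"
proof -
  assume "finite G"
  have "prs cls G \<subseteq> (\<lambda>(x,y). {x,y}) ` (G \<times> G)" unfolding prs_def by auto
  thus ?thesis using \<open>finite G\<close> by (meson finite_SigmaI finite_imageI finite_subset)
qed

lemma prs_mono: "X \<subseteq> Y \<Longrightarrow> prs cls X \<subseteq> prs cls Y"
  unfolding prs_def by blast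

lemma part_sub: "part G t i \<subseteq> G" unfolding part_def by auto

lemma diff_le:
  assumes "G \<subseteq> S" "finite S"
  shows "real (sep_pairs cls G) - real (sep_pairs cls (part G t i))
     \<le> real (sep_pairs cls S) - real (sep_pairs cls (part S t i))"
proof -
  have fG: "finite G" using assms finite_subset by blast
  have s1: "prs cls (part G t i) \<subseteq> prs cls G" by (rule prs_mono[OF part_sub])
  have s2: "prs cls (part S t i) \<subseteq> prs cls S" by (rule prs_mono[OF part_sub])
  have sub: "prs cls G - prs cls (part G t i) \<subseteq> prs cls S - prs cls (part S t i)"
  proof
    fix z assume z: "z \<in> prs cls G - prs cls (part G t i)"
    then obtain x y where xy: "z = {x,y}" "x \<in> G" "y \<in> G" "cls x \<noteq> cls y"
      unfolding prs_def by blast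
    have "z \<in> prs cls S" using z prs_mono[OF assms(1)] by blast
    moreover have "z \<notin> prs cls (part S t i)"
    proof
      assume "z \<in> prs cls (part S t i)"
      then obtain x' y' where "z = {x',y'}" "x' \<in> part S t i" "y' \<in> part S t i"
        unfolding prs_def by blast
      hence "x \<in> part G t i" "y \<in> part G t i" using xy unfolding part_def
        by (auto simp: doubleton_eq_iff)
      hence "z \<in> prs cls (part G t i)" using xy unfolding prs_def by blast
      thus False using z by blast
    qed
    ultimately show "z \<in> prs cls S - prs cls (part S t i)" by blast
  qed
  have "card (prs cls G - prs cls (part G t i)) \<le> card (prs cls S - prs cls (part S t i))"
    using sub prs_fin[OF assms(2)] by (meson card_mono finite_Diff)
  moreover have "card (prs cls G - prs cls (part G t i)) = card (prs cls G) - card (prs cls (part G t i))"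
    using s1 prs_fin[OF fG] by (meson card_Diff_subset finite_subset)
  moreover have "card (prs cls S - prs cls (part S t i)) = card (prs cls S) - card (prs cls (part S t i))"
    using s2 prs_fin[OF assms(2)] by (meson card_Diff_subset finite_subset)
  moreover have "card (prs cls (part G t i)) \<le> card (prs cls G)"
    using s1 prs_fin[OF fG] card_mono by blast
  moreover have "card (prs cls (part S t i)) \<le> card (prs cls S)"
    using s2 prs_fin[OF assms(2)] card_mono by blast
  ultimately show ?thesis unfolding sep_prs by linarith
qed

lemma sep_nonneg_diff:
  assumes "finite S"
  shows "real (sep_pairs cls (part S t i)) \<le> real (sep_pairs cls S)"
  unfolding sep_prs using card_mono[OF prs_fin[OF assms] prs_mono[OF part_sub]] by simp

lemma main:
  assumes "is_dtree cls T G D"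
    and fin: "finite S" and rho: "\<rho> \<ge> 0"
    and good: "\<forall>t\<in>T. \<exists>i\<in>{1,2}. c t i \<ge> \<rho> * (real (sep_pairs cls S) - real (sep_pairs cls (part S t i)))"
    and binary: "\<forall>t\<in>T. \<forall>s\<in>S. t s \<in> {1, 2}"
    and cpos: "\<forall>t\<in>T. \<forall>i\<in>{1, 2}. c t i > 0"
  shows "G \<subseteq> S \<Longrightarrow> G \<noteq> {} \<Longrightarrow> \<exists>s\<in>G. cost c D s \<ge> \<rho> * real (sep_pairs cls G)"
  using assms(1)
proof (induction rule: is_dtree.induct)
  case (leaf G k)
  have "prs cls G = {}" using leaf.hyps unfolding prs_def by auto
  thus ?case using leaf.prems by (auto simp: sep_prs)
next
  case (node G t f)
  obtain i where i: "i \<in> {1,2}" "c t i \<ge> \<rho> * (real (sep_pairs cls S) - real (sep_pairs cls (part S t i)))"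
    using good node.hyps(2) by blast
  show ?case
  proof (cases "part G t i = {}")
    case False
    have "part G t i \<subseteq> S" using part_sub[of G t i] node.prems by blast
    then obtain s where s: "s \<in> part G t i" "cost c (f i) s \<ge> \<rho> * real (sep_pairs cls (part G t i))"
      using node.IH False by blast
    have ts: "t s = i" "s \<in> G" using s(1) unfolding part_def by auto
    have "\<rho> * (real (sep_pairs cls G) - real (sep_pairs cls (part G t i)))
        \<le> \<rho> * (real (sep_pairs cls S) - real (sep_pairs cls (part S t i)))"
      using diff_le[OF node.prems(1) fin, of cls t i] rho by (rule mult_left_mono)
    hence "cost c (Node t f) s \<ge> \<rho> * real (sep_pairs cls G)"
      using ts s i by (simp add: algebra_simps)
    thus ?thesis using ts by blast
  next
    case True
    obtain s0 where s0: "s0 \<in> G" using node.prems by blast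
    define j where "j = t s0"
    have j: "j \<in> {1,2}" using binary node.hyps(2) s0 node.prems j_def by blast
    have "\<forall>s\<in>G. t s = j"
    proof
      fix s assume "s \<in> G"
      hence "t s \<in> {1,2}" "t s \<noteq> i" using binary node.hyps(2) node.prems True
        unfolding part_def by auto
      moreover have "j \<noteq> i" using True s0 unfolding part_def j_def by auto
      ultimately show "t s = j" using i j by auto
    qed
    hence pj: "part G t j = G" unfolding part_def by auto
    then obtain s where s: "s \<in> G" "cost c (f j) s \<ge> \<rho> * real (sep_pairs cls G)"
      using node.IH node.prems by (metis)
    have "t s = j" using s(1) \<open>\<forall>s\<in>G. t s = j\<close> by blast
    moreover have "c t j > 0" using cpos node.hyps(2) j by blast
    ultimately have "cost c (Node t f) s \<ge> \<rho> * real (sep_pairs cls G)" using s by simp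
    thus ?thesis using s by blast
  qed
qed

lemma dp_is: "dp_tree cls T c G D \<Longrightarrow> is_dtree cls T G D"
  by (induction rule: dp_tree.induct) (auto intro!: is_dtree.node is_dtree.leaf)

theorem lemma1:
  fixes S :: "'a set" and cls :: "'a \<Rightarrow> 'c" and T :: "('a \<Rightarrow> nat) set"
    and p :: "'a \<Rightarrow> real" and c :: "('a \<Rightarrow> nat) \<Rightarrow> nat \<Rightarrow> real"
    and \<tau> :: "'a \<Rightarrow> nat" and D :: "nat \<Rightarrow> ('a, 'c) dtree" and q :: nat
  assumes finS: "finite S" and finT: "finite T"
    and prob: "\<forall>s\<in>S. p s \<ge> 0" "sum p S = 1"
    and binary: "\<forall>t\<in>T. \<forall>s\<in>S. t s \<in> {1, 2}"
    and costs: "\<forall>t\<in>T. \<forall>i\<in>{1, 2}. c t i > 0 \<and> c t i \<in> \<rat>"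
    and complete: "\<forall>x\<in>S. \<forall>y\<in>S. x \<noteq> y \<longrightarrow> (\<exists>t\<in>T. t x \<noteq> t y)"
    and two_classes: "\<exists>x\<in>S. \<exists>y\<in>S. cls x \<noteq> cls y"
    and tau: "\<tau> \<in> T" "\<forall>t\<in>T. ratio2 cls c S \<tau> \<le> ratio2 cls c S t"
    and subtrees: "\<forall>i\<in>{1, 2}. dp_tree cls T c (part S \<tau> i) (D i)"
    and q: "q \<in> {1, 2}"
      "\<forall>i\<in>{1, 2}. c \<tau> i + cost_W c (D i) (part S \<tau> i) \<le> c \<tau> q + cost_W c (D q) (part S \<tau> q)"
  shows "OPT_W cls T c S \<ge>
           c \<tau> q * real (sep_pairs cls S) / (real (sep_pairs cls S) - real (sep_pairs cls (part S \<tau> q)))"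
proof -
  define d where "d = (\<lambda>t i. real (sep_pairs cls S) - real (sep_pairs cls (part S t i)))"
  have dnn: "\<And>t i. d t i \<ge> 0" unfolding d_def using sep_nonneg_diff[OF finS] by simp
  define \<rho> where "\<rho> = c \<tau> q / d \<tau> q"
  have cpos: "\<forall>t\<in>T. \<forall>i\<in>{1, 2}. c t i > 0" using costs by blast
  have rho: "\<rho> \<ge> 0" unfolding \<rho>_def using dnn[of \<tau> q] cpos tau(1) q(1) by (meson divide_nonneg_nonneg less_imp_le)
  have good: "\<forall>t\<in>T. \<exists>i\<in>{1,2}. c t i \<ge> \<rho> * d t i"
  proof
    fix t assume t: "t \<in> T"
    show "\<exists>i\<in>{1,2}. c t i \<ge> \<rho> * d t i"
    proof (cases "d \<tau> q = 0")
      case True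
      thus ?thesis using cpos t unfolding \<rho>_def by (auto intro: less_imp_le)
    next
      case False
      have "ratio cls c S \<tau> q = ereal \<rho>"
        using False unfolding ratio_def \<rho>_def d_def Let_def by simp
      moreover have "ratio cls c S \<tau> q \<le> ratio2 cls c S \<tau>"
        using q(1) unfolding ratio2_def by auto
      ultimately have le: "ereal \<rho> \<le> max (ratio cls c S t 1) (ratio cls c S t 2)"
        using tau(2) t unfolding ratio2_def by (metis order_trans)
      obtain i where i: "i \<in> {1::nat,2}" "ereal \<rho> \<le> ratio cls c S t i"
        using le by (metis insertI1 insertI2 max_def)
      show ?thesis
      proof (cases "d t i = 0")
        case True
        thus ?thesis using i cpos t by (auto intro: less_imp_le)
      next
        case False
        hence "ratio cls c S t i = ereal (c t i / d t i)"
          unfolding ratio_def d_def Let_def by simp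
        hence "\<rho> \<le> c t i / d t i" using i by simp
        moreover have "d t i > 0" using False dnn[of t i] by simp
        ultimately have "\<rho> * d t i \<le> c t i" by (simp add: pos_le_divide_eq)
        thus ?thesis using i by blast
      qed
    qed
  qed
  have nonempty: "is_dtree cls T S (Node \<tau> D)"
  proof (rule is_dtree.node)
    show "\<not> (\<exists>k. \<forall>s\<in>S. cls s = k)" using two_classes by metis
    show "\<tau> \<in> T" by (rule tau(1))
    show "\<forall>i. part S \<tau> i \<noteq> {} \<longrightarrow> is_dtree cls T (part S \<tau> i) (D i)"
    proof (intro allI impI)
      fix i assume "part S \<tau> i \<noteq> {}"
      hence "i \<in> {1,2}" using binary tau(1) unfolding part_def by auto
      thus "is_dtree cls T (part S \<tau> i) (D i)" using subtrees dp_is by blast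
    qed
  qed
  have Sne: "S \<noteq> {}" using two_classes by blast
  have lb: "\<And>E. is_dtree cls T S E \<Longrightarrow> \<rho> * real (sep_pairs cls S) \<le> cost_W c E S"
  proof -
    fix E assume E: "is_dtree cls T S E"
    obtain s where s: "s \<in> S" "cost c E s \<ge> \<rho> * real (sep_pairs cls S)"
      using main[OF E finS rho _ binary cpos] good Sne unfolding d_def by blast
    have "cost c E s \<le> cost_W c E S" unfolding cost_W_def
      using s(1) finS by (simp add: Max_ge)
    thus "\<rho> * real (sep_pairs cls S) \<le> cost_W c E S" using s by linarith
  qed
  have "\<rho> * real (sep_pairs cls S) \<le> OPT_W cls T c S"
    unfolding OPT_W_def
    by (rule cInf_greatest) (use nonempty lb in auto)
  moreover have "\<rho> * real (sep_pairs cls S) = c \<tau> q * real (sep_pairs cls S) / d \<tau> q"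
    unfolding \<rho>_def by simp
  ultimately show ?thesis unfolding d_def by simp
qed

end
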